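(* Let $A\subset\mathbb{R}^3$ be a finite set. Then $A^{hv}$ is a $2+1$-complex.
   Context: Let $H=\{h_1<\dots<h_m\}$ be the set of $z$-coordinates of points of $A$, and let $\pi$ denote projection to the $(x,y)$-plane. The h-convex hull is $A^h=\bigcup_{h\in H}co(A\cap\{z=h\})$, where $co$ is the usual convex hull. The hv-convex hull is $A^{hv}=A^h\cup\bigcup_{j=1}^{m-1}\big(\pi(co(A\cap\{z=h_j\}))\cap\pi(co(A\cap\{z=h_{j+1}\}))\big)\times[h_j,h_{j+1}]$. A horizontal segment is one contained in a plane $\{z=c\}$; a vertical segment is parallel to the $z$ axis. A $2+1$-complex is a closed subset of $\mathbb{R}^3$ that is the union of a finite list $L$ of elements, each of one of the following kinds: points; relatively open horizontal segments whose two endpoints belong to $L$; relatively open vertical segments whose two endpoints belong to $L$; relatively open triangles in a horizontal plane whose three boundary segments belong to $L$; relatively open rectangles in a vertical plane, two of whose sides are parallel to the $z$ axis, whose four boundary segments belong to $L$; open subsets of $\mathbb{R}^3$ whose boundary is a union of elements of the previous kinds, all belonging to $L$. *)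

theory Defs
  imports "HOL-Analysis.Analysis"
begin

type_synonym pt3 = "real ^ 3"

definition zc :: "pt3 \<Rightarrow> real" where "zc p = p $ 3"

definition proj_xy :: "pt3 \<Rightarrow> real \<times> real" where "proj_xy p = (p $ 1, p $ 2)"

definition heights :: "pt3 set \<Rightarrow> real set" where "heights A = zc ` A"

definition slice :: "pt3 set \<Rightarrow> real \<Rightarrow> pt3 set" where
  "slice A h = {p \<in> A. zc p = h}"

definition h_hull :: "pt3 set \<Rightarrow> pt3 set" where
  "h_hull A = (\<Union>h\<in>heights A. convex hull (slice A h))"

definition consecutive :: "real set \<Rightarrow> real \<Rightarrow> real \<Rightarrow> bool" where
  "consecutive H h h' \<longleftrightarrow> h \<in> H \<and> h' \<in> H \<and> h < h' \<and> \<not> (\<exists>g\<in>H. h < g \<and> g < h')"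

definition hv_hull :: "pt3 set \<Rightarrow> pt3 set" where
  "hv_hull A = h_hull A \<union>
     (\<Union>{ {p. proj_xy p \<in> proj_xy ` (convex hull (slice A h)) \<inter> proj_xy ` (convex hull (slice A h'))
              \<and> h \<le> zc p \<and> zc p \<le> h'} | h h'. consecutive (heights A) h h'})"

definition e3 :: pt3 where "e3 = axis 3 1"

text \<open>Elements of a 2+1-complex of the lower-dimensional kinds (all except open 3-cells),
  relative to the list (finite set) L of elements.\<close>
definition low_cell :: "pt3 set set \<Rightarrow> pt3 set \<Rightarrow> bool" where
  "low_cell L C \<longleftrightarrow>
     (\<exists>a. C = {a})
   \<or> (\<exists>a b. a \<noteq> b \<and> zc a = zc b \<and> C = open_segment a b \<and> {a} \<in> L \<and> {b} \<in> L)
   \<or> (\<exists>a b. a \<noteq> b \<and> a $ 1 = b $ 1 \<and> a $ 2 = b $ 2 \<and> C = open_segment a b \<and> {a} \<in> L \<and> {b} \<in> L)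
   \<or> (\<exists>a b c. zc a = zc b \<and> zc b = zc c \<and> \<not> collinear {a, b, c}
        \<and> C = rel_interior (convex hull {a, b, c})
        \<and> open_segment a b \<in> L \<and> open_segment b c \<in> L \<and> open_segment a c \<in> L)
   \<or> (\<exists>a b s. a \<noteq> b \<and> zc a = zc b \<and> s > 0
        \<and> C = rel_interior (convex hull {a, b, a + s *\<^sub>R e3, b + s *\<^sub>R e3})
        \<and> open_segment a b \<in> L \<and> open_segment (a + s *\<^sub>R e3) (b + s *\<^sub>R e3) \<in> L
        \<and> open_segment a (a + s *\<^sub>R e3) \<in> L \<and> open_segment b (b + s *\<^sub>R e3) \<in> L)"

definition cell21 :: "pt3 set set \<Rightarrow> pt3 set \<Rightarrow> bool" where
  "cell21 L C \<longleftrightarrow> low_cell L C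
     \<or> (open C \<and> (\<exists>S \<subseteq> L. (\<forall>D\<in>S. low_cell L D) \<and> frontier C = \<Union>S))"

definition complex_2p1 :: "pt3 set \<Rightarrow> bool" where
  "complex_2p1 X \<longleftrightarrow> closed X \<and>
     (\<exists>L. finite L \<and> (\<forall>C\<in>L. cell21 L C) \<and> X = \<Union>L)"

end

theory Submission
  imports Defs
begin


definition gl :: "(real \<times> real) \<times> real \<Rightarrow> real^3" where
  "gl q = vector [fst (fst q), snd (fst q), snd q]"

lemma gl_comp [simp]: "gl q $ 1 = fst (fst q)" "gl q $ 2 = snd (fst q)" "gl q $ 3 = snd q"
  by (simp_all add: gl_def)

lemma zc_gl [simp]: "zc (gl q) = snd q" and proj_gl [simp]: "proj_xy (gl q) = fst q"
  by (simp_all add: zc_def proj_xy_def)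

lemma linear_gl: "linear gl"
  by (rule linearI) (simp_all add: vec_eq_iff forall_3)

lemma gl_inv: "gl (proj_xy p, zc p) = p"
  by (simp add: vec_eq_iff forall_3 proj_xy_def zc_def)

lemma bij_gl: "bij gl"
proof (rule bijI)
  show "inj gl" unfolding inj_def
    by (metis proj_gl zc_gl prod.collapse)
  show "surj gl" by (rule surjI[of _ "\<lambda>p. (proj_xy p, zc p)"]) (rule gl_inv)
qed

lemma linear_proj: "linear proj_xy"
  by (rule linearI) (simp_all add: proj_xy_def)

lemma e3_comp [simp]: "e3 $ 1 = 0" "e3 $ 2 = 0" "e3 $ 3 = 1"
  by (simp_all add: e3_def axis_def)

lemma zc_add [simp]: "zc (a + b) = zc a + zc b" and zc_scale [simp]: "zc (c *\<^sub>R a) = c * zc a"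
  by (simp_all add: zc_def)

lemma zc_e3 [simp]: "zc e3 = 1" by (simp add: zc_def)



definition lowcx :: "pt3 set \<Rightarrow> bool" where
  "lowcx X \<longleftrightarrow> (\<exists>L. finite L \<and> (\<forall>C\<in>L. low_cell L C) \<and> \<Union>L = X)"

definition cx :: "pt3 set \<Rightarrow> bool" where
  "cx X \<longleftrightarrow> (\<exists>L. finite L \<and> (\<forall>C\<in>L. cell21 L C) \<and> \<Union>L = X)"

lemma low_cell_mono: "L \<subseteq> L' \<Longrightarrow> low_cell L C \<Longrightarrow> low_cell L' C"
  unfolding low_cell_def by (elim disjE exE; blast)

lemma cell21_mono: "L \<subseteq> L' \<Longrightarrow> cell21 L C \<Longrightarrow> cell21 L' C"
  unfolding cell21_def by (metis low_cell_mono subset_trans)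

lemma low_cell_pt: "low_cell L {a}"
  unfolding low_cell_def by blast

lemma low_cell_hseg: "a \<noteq> b \<Longrightarrow> zc a = zc b \<Longrightarrow> {a} \<in> L \<Longrightarrow> {b} \<in> L \<Longrightarrow> low_cell L (open_segment a b)"
  unfolding low_cell_def by blast

lemma low_cell_vseg: "a \<noteq> b \<Longrightarrow> a $ 1 = b $ 1 \<Longrightarrow> a $ 2 = b $ 2 \<Longrightarrow> {a} \<in> L \<Longrightarrow> {b} \<in> L \<Longrightarrow> low_cell L (open_segment a b)"
  unfolding low_cell_def by blast

lemma low_cell_tri: "zc a = zc b \<Longrightarrow> zc b = zc c \<Longrightarrow> \<not> collinear {a, b, c}
   \<Longrightarrow> open_segment a b \<in> L \<Longrightarrow> open_segment b c \<in> L \<Longrightarrow> open_segment a c \<in> L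
   \<Longrightarrow> low_cell L (rel_interior (convex hull {a, b, c}))"
  unfolding low_cell_def by blast

lemma low_cell_rect: "a \<noteq> b \<Longrightarrow> zc a = zc b \<Longrightarrow> s > 0
   \<Longrightarrow> open_segment a b \<in> L \<Longrightarrow> open_segment (a + s *\<^sub>R e3) (b + s *\<^sub>R e3) \<in> L
   \<Longrightarrow> open_segment a (a + s *\<^sub>R e3) \<in> L \<Longrightarrow> open_segment b (b + s *\<^sub>R e3) \<in> L
   \<Longrightarrow> low_cell L (rel_interior (convex hull {a, b, a + s *\<^sub>R e3, b + s *\<^sub>R e3}))"
  unfolding low_cell_def by blast

lemma lowcx_empty: "lowcx {}"
  unfolding lowcx_def by (rule exI[of _ "{}"]) auto

lemma lowcx_Un: assumes "lowcx X" "lowcx Y" shows "lowcx (X \<union> Y)"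
proof -
  obtain L1 where 1: "finite L1" "\<forall>C\<in>L1. low_cell L1 C" "\<Union>L1 = X" using assms(1) lowcx_def by auto
  obtain L2 where 2: "finite L2" "\<forall>C\<in>L2. low_cell L2 C" "\<Union>L2 = Y" using assms(2) lowcx_def by auto
  show ?thesis unfolding lowcx_def
    apply (rule exI[of _ "L1 \<union> L2"])
    using 1 2 low_cell_mono[of L1 "L1 \<union> L2"] low_cell_mono[of L2 "L1 \<union> L2"] by auto
qed

lemma lowcx_Union: "finite F \<Longrightarrow> (\<And>X. X \<in> F \<Longrightarrow> lowcx X) \<Longrightarrow> lowcx (\<Union>F)"
  by (induction F rule: finite_induct) (auto intro: lowcx_Un lowcx_empty)

lemma cx_empty: "cx {}"
  unfolding cx_def by (rule exI[of _ "{}"]) auto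

lemma cx_Un: assumes "cx X" "cx Y" shows "cx (X \<union> Y)"
proof -
  obtain L1 where 1: "finite L1" "\<forall>C\<in>L1. cell21 L1 C" "\<Union>L1 = X" using assms(1) cx_def by auto
  obtain L2 where 2: "finite L2" "\<forall>C\<in>L2. cell21 L2 C" "\<Union>L2 = Y" using assms(2) cx_def by auto
  show ?thesis unfolding cx_def
    apply (rule exI[of _ "L1 \<union> L2"])
    using 1 2 cell21_mono[of L1 "L1 \<union> L2"] cell21_mono[of L2 "L1 \<union> L2"] by auto
qed

lemma cx_Union: "finite F \<Longrightarrow> (\<And>X. X \<in> F \<Longrightarrow> cx X) \<Longrightarrow> cx (\<Union>F)"
  by (induction F rule: finite_induct) (auto intro: cx_Un cx_empty)

lemma lowcx_cx: "lowcx X \<Longrightarrow> cx X"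
  unfolding lowcx_def cx_def cell21_def by blast

lemma lowcx_sing: "lowcx {a}"
  unfolding lowcx_def by (rule exI[of _ "{{a}}"]) (auto simp: low_cell_def)

lemma closed_seg_split: "closed_segment a b = open_segment a b \<union> {a} \<union> {b}"
  by (auto simp: open_segment_def)

lemma lowcx_hseg: assumes "zc a = zc b" shows "lowcx (closed_segment a b)"
proof (cases "a = b")
  case True then show ?thesis using lowcx_sing by simp
next
  case False
  show ?thesis unfolding lowcx_def
    apply (rule exI[of _ "{{a},{b},open_segment a b}"])
    using False assms by (auto simp: low_cell_def open_segment_def)
qed

lemma lowcx_vseg: assumes "a $ 1 = b $ 1" "a $ 2 = b $ 2" shows "lowcx (closed_segment a b)"
proof (cases "a = b")
  case True then show ?thesis using lowcx_sing by simp
next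
  case False
  show ?thesis unfolding lowcx_def
    apply (rule exI[of _ "{{a},{b},open_segment a b}"])
    using False assms by (auto simp: low_cell_def open_segment_def)
qed



lemma hull3_sub_seg:
  fixes a b c :: pt3
  assumes "c' \<subseteq> {a,b,c}" "c' \<noteq> {a,b,c}"
  shows "convex hull c' \<subseteq> closed_segment a b \<union> closed_segment b c \<union> closed_segment a c"
proof -
  have "c' \<subseteq> {a,b} \<or> c' \<subseteq> {b,c} \<or> c' \<subseteq> {a,c}" using assms by auto
  then show ?thesis
    by (auto simp: segment_convex_hull dest: hull_mono[of _ _ convex])
qed

lemma lowcx_htri:
  assumes "zc a = zc b" "zc b = zc c"
  shows "lowcx (convex hull {a,b,c})"
proof (cases "collinear {a,b,c}")
  case True
  then have "between (b,c) a \<or> between (c,a) b \<or> between (a,b) c"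
    using collinear_between_cases by blast
  then show ?thesis
  proof (elim disjE)
    assume "between (b,c) a"
    then have "a \<in> convex hull {b,c}" by (simp add: between_mem_segment segment_convex_hull)
    then have "convex hull {a,b,c} = closed_segment b c"
      by (simp add: hull_redundant segment_convex_hull)
    then show ?thesis using lowcx_hseg assms by simp
  next
    assume "between (c,a) b"
    then have "b \<in> convex hull {c,a}" by (simp add: between_mem_segment segment_convex_hull)
    moreover have "{a,b,c} = insert b {c,a}" by auto
    ultimately have "convex hull {a,b,c} = closed_segment c a"
      by (simp add: hull_redundant segment_convex_hull)
    then show ?thesis using lowcx_hseg assms by simp
  next
    assume "between (a,b) c"
    then have "c \<in> convex hull {a,b}" by (simp add: between_mem_segment segment_convex_hull)
    then have "convex hull {a,b,c} = closed_segment a b"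
      by (metis hull_redundant segment_convex_hull insert_commute)
    then show ?thesis using lowcx_hseg assms by simp
  qed
next
  case False
  then have dist: "a \<noteq> b" "b \<noteq> c" "a \<noteq> c" and ind: "\<not> affine_dependent {a,b,c}"
    using collinear_3_eq_affine_dependent by blast+
  let ?T = "convex hull {a,b,c}"
  have fr: "?T - rel_interior ?T \<subseteq> closed_segment a b \<union> closed_segment b c \<union> closed_segment a c"
  proof
    fix x assume x: "x \<in> ?T - rel_interior ?T"
    have "polyhedron ?T" by (simp add: polytope_imp_polyhedron polytope_convex_hull)
    moreover have "closure ?T = ?T" by (simp add: closure_closed compact_imp_closed finite_imp_compact_convex_hull)
    ultimately have "x \<in> \<Union> {F. F face_of ?T \<and> F \<noteq> ?T}"
      using x rel_frontier_of_polyhedron_alt[of ?T] unfolding rel_frontier_def by simp blast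
    then obtain F where F: "F face_of ?T" "F \<noteq> ?T" "x \<in> F" by auto
    then obtain c' where "c' \<subseteq> {a,b,c}" "F = convex hull c'"
      using face_of_convex_hull_affine_independent[OF ind] by blast
    with F have "c' \<noteq> {a,b,c}" by auto
    then show "x \<in> closed_segment a b \<union> closed_segment b c \<union> closed_segment a c"
      using hull3_sub_seg[OF \<open>c' \<subseteq> {a,b,c}\<close>] \<open>F = convex hull c'\<close> F(3) by blast
  qed
  have sub: "closed_segment a b \<subseteq> ?T" "closed_segment b c \<subseteq> ?T" "closed_segment a c \<subseteq> ?T"
    by (auto simp: segment_convex_hull intro!: hull_mono)
  let ?L = "{{a},{b},{c}, open_segment a b, open_segment b c, open_segment a c, rel_interior ?T}"
  have "\<Union>?L = ?T"
  proof
    show "\<Union>?L \<subseteq> ?T" using sub rel_interior_subset[of ?T] hull_subset[of "{a,b,c}" convex]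
      by (auto simp: open_segment_def)
    show "?T \<subseteq> \<Union>?L" using fr by (auto simp: open_segment_def)
  qed
  moreover have "\<forall>C\<in>?L. low_cell ?L C"
    using dist assms False by (auto intro: low_cell_pt low_cell_hseg low_cell_tri)
  ultimately show ?thesis unfolding lowcx_def by (intro exI[of _ ?L]) auto
qed



lemma small_set3:
  assumes "finite S" "S \<noteq> {}" "card S \<le> 3"
  obtains a b c where "S = {a,b,c}"
proof -
  have "card S = 1 \<or> card S = 2 \<or> card S = 3" using assms card_gt_0_iff[of S] by linarith
  then show ?thesis
  proof (elim disjE)
    assume "card S = 1" then obtain a where "S = {a}" by (metis One_nat_def card_1_singleton_iff)
    then show ?thesis using that[of a a a] by auto
  next
    assume "card S = 2" then obtain a b where "S = {a,b}" by (metis card_2_iff)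
    then show ?thesis using that[of a a b] by auto
  next
    assume "card S = 3" then obtain a b c where "S = {a,b,c}" by (metis card_3_iff)
    then show ?thesis using that by auto
  qed
qed

lemma small_set2:
  assumes "finite S" "S \<noteq> {}" "card S \<le> 2"
  obtains a b where "S = {a,b}"
proof -
  have "card S = 1 \<or> card S = 2" using assms card_gt_0_iff[of S] by linarith
  then show ?thesis
  proof (elim disjE)
    assume "card S = 1" then obtain a where "S = {a}" by (metis One_nat_def card_1_singleton_iff)
    then show ?thesis using that[of a a] by auto
  next
    assume "card S = 2" then obtain a b where "S = {a,b}" by (metis card_2_iff)
    then show ?thesis using that by auto
  qed
qed

lemma carat2:
  fixes V :: "'a::euclidean_space set"
  assumes "aff_dim V \<le> 2"
  shows "convex hull V = \<Union>((\<lambda>(a,b,c). convex hull {a,b,c}) ` (V \<times> V \<times> V))"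
proof
  show "\<Union>((\<lambda>(a,b,c). convex hull {a,b,c}) ` (V \<times> V \<times> V)) \<subseteq> convex hull V"
  proof (rule UN_least)
    fix x assume "x \<in> V \<times> V \<times> V"
    then obtain a b c where "x = (a,b,c)" "{a,b,c} \<subseteq> V" by auto
    then show "(case x of (a,b,c) \<Rightarrow> convex hull {a,b,c}) \<subseteq> convex hull V"
      by (simp add: hull_mono)
  qed
  show "convex hull V \<subseteq> \<Union>((\<lambda>(a,b,c). convex hull {a,b,c}) ` (V \<times> V \<times> V))"
  proof
    fix x assume "x \<in> convex hull V"
    then obtain S where S: "finite S" "S \<subseteq> V" "card S \<le> aff_dim V + 1" "x \<in> convex hull S"
      using caratheodory_aff_dim[of V] by auto
    then have "S \<noteq> {}" by auto
    moreover have "card S \<le> 3" using S(3) assms by linarith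
    ultimately obtain a b c where "S = {a,b,c}" using small_set3 S(1) by blast
    then show "x \<in> \<Union>((\<lambda>(a,b,c). convex hull {a,b,c}) ` (V \<times> V \<times> V))"
      using S by (intro UN_I[of "(a,b,c)"]) auto
  qed
qed

lemma carat1:
  fixes V :: "'a::euclidean_space set"
  assumes "aff_dim V \<le> 1"
  shows "convex hull V = \<Union>((\<lambda>(a,b). closed_segment a b) ` (V \<times> V))"
proof
  show "\<Union>((\<lambda>(a,b). closed_segment a b) ` (V \<times> V)) \<subseteq> convex hull V"
  proof (rule UN_least)
    fix x assume "x \<in> V \<times> V"
    then obtain a b where "x = (a,b)" "{a,b} \<subseteq> V" by auto
    then show "(case x of (a,b) \<Rightarrow> closed_segment a b) \<subseteq> convex hull V"
      by (simp add: hull_mono segment_convex_hull)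
  qed
  show "convex hull V \<subseteq> \<Union>((\<lambda>(a,b). closed_segment a b) ` (V \<times> V))"
  proof
    fix x assume "x \<in> convex hull V"
    then obtain S where S: "finite S" "S \<subseteq> V" "card S \<le> aff_dim V + 1" "x \<in> convex hull S"
      using caratheodory_aff_dim[of V] by auto
    then have "S \<noteq> {}" by auto
    moreover have "card S \<le> 2" using S(3) assms by linarith
    ultimately obtain a b where "S = {a,b}" using small_set2 S(1) by blast
    then show "x \<in> \<Union>((\<lambda>(a,b). closed_segment a b) ` (V \<times> V))"
      using S by (intro UN_I[of "(a,b)"]) (auto simp: segment_convex_hull)
  qed
qed

lemma lowcx_hpoly:
  assumes "finite V" "\<And>v. v \<in> V \<Longrightarrow> zc v = h"
  shows "lowcx (convex hull V)"
proof -
  have "V \<subseteq> {x. e3 \<bullet> x = h}" using assms(2) by (auto simp: e3_def inner_axis' zc_def)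
  then have "aff_dim V \<le> aff_dim {x::pt3. e3 \<bullet> x = h}" by (rule aff_dim_subset)
  moreover have "e3 \<noteq> 0" by (metis e3_comp(3) zero_index zero_neq_one)
  ultimately have "aff_dim V \<le> 2" by simp
  then have eq: "convex hull V = \<Union>((\<lambda>(a,b,c). convex hull {a,b,c}) ` (V \<times> V \<times> V))"
    by (rule carat2)
  show ?thesis unfolding eq
    apply (rule lowcx_Union)
    using assms by (auto intro!: lowcx_htri)
qed



lemma seg_transl: fixes a q w :: "'a::real_vector"
  shows "q \<in> closed_segment 0 w \<Longrightarrow> a + q \<in> closed_segment a (a + w)"
  using closed_segment_translation[of a 0 w] by auto

lemma seg_transl2: fixes a b p w :: "'a::real_vector"
  shows "p \<in> closed_segment a b \<Longrightarrow> p + w \<in> closed_segment (a + w) (b + w)"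
  using closed_segment_translation[of w a b] by (auto simp: add.commute)

lemma lowcx_rect:
  assumes ab: "a \<noteq> b" "zc a = zc b" and s: "s > 0"
  shows "lowcx (convex hull {a, b, a + s *\<^sub>R e3, b + s *\<^sub>R e3})"
proof -
  define w where "w = s *\<^sub>R e3"
  have "w $ 3 = s" by (simp add: w_def)
  then have w0: "w \<noteq> 0" using s by auto
  have "{a, b, a + w, b + w} = {a,b} + {0,w}"
  proof (rule set_eqI, rule iffI)
    fix x assume "x \<in> {a, b, a + w, b + w}"
    moreover have "a + 0 \<in> {a,b} + {0,w}" "b + 0 \<in> {a,b} + {0,w}" "a + w \<in> {a,b} + {0,w}" "b + w \<in> {a,b} + {0,w}"
      by (intro set_plus_intro; simp)+
    ultimately show "x \<in> {a,b} + {0,w}" by auto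
  next
    fix x assume "x \<in> {a,b} + {0,w}"
    then show "x \<in> {a, b, a + w, b + w}" by (elim set_plus_elim) auto
  qed
  then have R: "convex hull {a, b, a + w, b + w} = closed_segment a b + closed_segment 0 w"
    by (simp add: convex_hull_set_plus segment_convex_hull)
  have RI: "rel_interior (convex hull {a, b, a + w, b + w}) = open_segment a b + open_segment 0 w"
    unfolding R using ab w0 by (simp add: rel_interior_sum rel_interior_closed_segment)
  let ?R = "convex hull {a, b, a + w, b + w}"
  let ?L = "{{a},{b},{a+w},{b+w}, open_segment a b, open_segment (a+w) (b+w),
             open_segment a (a+w), open_segment b (b+w), rel_interior ?R}"
  have segs: "closed_segment a b \<subseteq> ?R" "closed_segment (a+w) (b+w) \<subseteq> ?R"
      "closed_segment a (a+w) \<subseteq> ?R" "closed_segment b (b+w) \<subseteq> ?R"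
    by (auto simp: segment_convex_hull intro!: hull_mono)
  have "\<Union>?L = ?R"
  proof
    show "\<Union>?L \<subseteq> ?R" using segs rel_interior_subset[of ?R] hull_subset[of "{a, b, a + w, b + w}" convex]
      by (auto simp: open_segment_def)
    show "?R \<subseteq> \<Union>?L"
    proof
      fix x assume "x \<in> ?R"
      then obtain p q where pq: "p \<in> closed_segment a b" "q \<in> closed_segment 0 w" "x = p + q"
        unfolding R by (elim set_plus_elim) blast
      show "x \<in> \<Union>?L"
      proof (cases "p \<in> open_segment a b \<and> q \<in> open_segment 0 w")
        case True
        then have "x \<in> rel_interior ?R" unfolding RI using pq by (simp add: set_plus_intro)
        then show ?thesis by blast
      next
        case False
        then have "p = a \<or> p = b \<or> q = 0 \<or> q = w" using pq by (auto simp: open_segment_def)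
        then have "x \<in> closed_segment a (a+w) \<or> x \<in> closed_segment b (b+w) \<or>
                   x \<in> closed_segment a b \<or> x \<in> closed_segment (a+w) (b+w)"
          using pq seg_transl[of q w a] seg_transl[of q w b] seg_transl2[of p a b w] by auto
        then show ?thesis by (auto simp: open_segment_def)
      qed
    qed
  qed
  moreover have "\<forall>C\<in>?L. low_cell ?L C"
  proof -
    have z: "zc (a + w) = zc (b + w)" using ab by (simp add: w_def)
    have v: "(a + w) $ 1 = a $ 1" "(a + w) $ 2 = a $ 2" "(b + w) $ 1 = b $ 1" "(b + w) $ 2 = b $ 2"
      by (simp_all add: w_def)
    have d: "a + w \<noteq> b + w" "a \<noteq> a + w" "b \<noteq> b + w" using ab w0 by auto
    have "low_cell ?L (rel_interior ?R)"
      using low_cell_rect[OF ab s, of ?L] by (simp add: w_def)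
    moreover have "low_cell ?L (open_segment a b)"
      by (rule low_cell_hseg[OF ab]) simp_all
    moreover have "low_cell ?L (open_segment (a+w) (b+w))"
      by (rule low_cell_hseg[OF d(1) z]) simp_all
    moreover have "low_cell ?L (open_segment a (a+w))"
      by (rule low_cell_vseg[OF d(2) v(1)[symmetric] v(2)[symmetric]]) simp_all
    moreover have "low_cell ?L (open_segment b (b+w))"
      by (rule low_cell_vseg[OF d(3) v(3)[symmetric] v(4)[symmetric]]) simp_all
    moreover have "low_cell ?L {x}" for x by (rule low_cell_pt)
    ultimately show ?thesis by (simp only: ball_simps)
  qed
  moreover have fin: "finite ?L" by simp
  ultimately have "lowcx ?R" unfolding lowcx_def by (intro exI[of _ ?L] conjI) assumption+
  then show ?thesis unfolding w_def by assumption
qed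



definition segs :: "(real \<times> real) set \<Rightarrow> bool" where
  "segs X \<longleftrightarrow> (\<exists>F. finite F \<and> X = \<Union>((\<lambda>(u,v). closed_segment u v) ` F))"

lemma segs_empty: "segs {}" unfolding segs_def by (rule exI[of _ "{}"]) simp

lemma segs_Un: "segs X \<Longrightarrow> segs Y \<Longrightarrow> segs (X \<union> Y)"
  unfolding segs_def
  apply (elim exE conjE)
  subgoal for F1 F2 by (rule exI[of _ "F1 \<union> F2"]) auto
  done

lemma segs_Union: "finite G \<Longrightarrow> (\<And>X. X \<in> G \<Longrightarrow> segs X) \<Longrightarrow> segs (\<Union>G)"
  by (induction G rule: finite_induct) (auto intro: segs_Un segs_empty)

lemma segs_polytope:
  assumes "polytope P" "aff_dim P \<le> 1"
  shows "segs P"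
proof -
  obtain V where V: "finite V" "P = convex hull V" using assms(1) polytope_def by auto
  then have "aff_dim V \<le> 1" using assms(2) by (simp add: aff_dim_convex_hull)
  then have "P = \<Union>((\<lambda>(a,b). closed_segment a b) ` (V \<times> V))" using V(2) carat1 by blast
  then show ?thesis unfolding segs_def using V(1) by (intro exI[of _ "V \<times> V"]) simp
qed

lemma frontier_segs:
  fixes D :: "(real \<times> real) set"
  assumes "polytope D"
  shows "segs (frontier D)"
proof (cases "interior D = {}")
  case True
  have cl: "closure D = D" using assms by (simp add: closure_closed compact_imp_closed polytope_imp_compact)
  have fr: "frontier D = D" using True cl by (simp add: frontier_def)
  have "aff_dim D \<le> 1"
  proof (rule ccontr)
    assume "\<not> aff_dim D \<le> 1"
    then have "aff_dim D = 2" using aff_dim_le_DIM[of D] by simp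
    then have "affine hull D = UNIV" using aff_dim_eq_full[of D] by simp
    then have "rel_interior D = interior D" by (rule rel_interior_interior)
    moreover have "D \<noteq> {}" using \<open>aff_dim D = 2\<close> by auto
    moreover have "convex D" using assms polytope_imp_convex by blast
    ultimately show False using True rel_interior_eq_empty by blast
  qed
  then show ?thesis using fr assms segs_polytope by simp
next
  case False
  have cl: "closure D = D" using assms by (simp add: closure_closed compact_imp_closed polytope_imp_compact)
  have "rel_interior D = interior D"
    using False affine_hull_nonempty_interior rel_interior_interior by blast
  then have "frontier D = rel_frontier D" by (simp add: frontier_def rel_frontier_def)
  also have "\<dots> = \<Union>{F. F face_of D \<and> F \<noteq> D}"
    using assms by (simp add: rel_frontier_of_polyhedron_alt polytope_imp_polyhedron)
  finally have fr: "frontier D = \<Union>{F. F face_of D \<and> F \<noteq> D}" .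
  show ?thesis unfolding fr
  proof (rule segs_Union)
    show "finite {F. F face_of D \<and> F \<noteq> D}"
      using finite_polytope_faces[OF assms] by (rule finite_subset[rotated]) auto
    fix F assume F: "F \<in> {F. F face_of D \<and> F \<noteq> D}"
    then have "aff_dim F < aff_dim D"
      using face_of_aff_dim_lt assms polytope_imp_convex by blast
    moreover have "aff_dim D \<le> 2" using aff_dim_le_DIM[of D] by simp
    ultimately have "aff_dim F \<le> 1" by simp
    moreover have "polytope F" using F face_of_polytope_polytope assms by blast
    ultimately show "segs F" using segs_polytope by blast
  qed
qed



lemma gl_shift: "gl (u, h') = gl (u, h) + (h' - h) *\<^sub>R e3"
  by (simp add: vec_eq_iff forall_3)

lemma lowcx_wall:
  assumes "h < h'"
  shows "lowcx (gl ` (closed_segment u v \<times> {h..h'}))"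
proof -
  have "convex hull ({u,v} \<times> {h,h'}) = (convex hull {u,v}) \<times> (convex hull {h,h'})"
    by (rule convex_hull_Times)
  also have "\<dots> = closed_segment u v \<times> closed_segment h h'" by (simp add: segment_convex_hull)
  also have "\<dots> = closed_segment u v \<times> {h..h'}" using assms by (simp add: closed_segment_eq_real_ivl)
  finally have "closed_segment u v \<times> {h..h'} = convex hull ({u,v} \<times> {h,h'})" by simp
  then have eq: "gl ` (closed_segment u v \<times> {h..h'}) = convex hull (gl ` ({u,v} \<times> {h,h'}))"
    by (simp add: convex_hull_linear_image linear_gl)
  show ?thesis
  proof (cases "u = v")
    case True
    then have "gl ` ({u,v} \<times> {h,h'}) = {gl (u,h), gl (u,h')}" by auto
    moreover have "lowcx (closed_segment (gl (u,h)) (gl (u,h')))" by (rule lowcx_vseg) simp_all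
    ultimately show ?thesis unfolding eq by (simp add: segment_convex_hull)
  next
    case False
    define s where "s = h' - h"
    have s: "s > 0" using assms s_def by simp
    have "gl ` ({u,v} \<times> {h,h'}) = {gl (u,h), gl (v,h), gl (u,h) + s *\<^sub>R e3, gl (v,h) + s *\<^sub>R e3}"
      unfolding s_def gl_shift[symmetric] by auto
    moreover have "gl (u,h) \<noteq> gl (v,h)" using False by (metis proj_gl fst_conv)
    ultimately show ?thesis unfolding eq using lowcx_rect[OF _ _ s] by simp
  qed
qed

lemma lowcx_hface:
  assumes "finite V"
  shows "lowcx (gl ` ((convex hull V) \<times> {c}))"
proof -
  have "(convex hull V) \<times> {c} = convex hull (V \<times> {c})" by (simp add: convex_hull_Times)
  then have "gl ` ((convex hull V) \<times> {c}) = convex hull (gl ` (V \<times> {c}))"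
    by (simp add: convex_hull_linear_image linear_gl)
  moreover have "lowcx (convex hull (gl ` (V \<times> {c})))"
    by (rule lowcx_hpoly[where h = c]) (use assms in auto)
  ultimately show ?thesis by simp
qed

lemma lowcx_walls:
  assumes "segs X" "h < h'"
  shows "lowcx (gl ` (X \<times> {h..h'}))"
proof -
  obtain F where F: "finite F" "X = \<Union>((\<lambda>(u,v). closed_segment u v) ` F)" using assms(1) segs_def by auto
  have "gl ` (X \<times> {h..h'}) = \<Union>((\<lambda>(u,v). gl ` (closed_segment u v \<times> {h..h'})) ` F)"
    unfolding F(2) by auto
  also have "lowcx \<dots>"
    using F(1) by (intro lowcx_Union) (auto intro: lowcx_wall assms(2))
  finally show ?thesis .
qed



lemma cx_prism:
  assumes D: "polytope D" and hh: "h < h'"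
  shows "cx (gl ` (D \<times> {h..h'}))" and "compact (gl ` (D \<times> {h..h'}))"
proof -
  obtain V where V: "finite V" "D = convex hull V" using D polytope_def by auto
  let ?W = "gl ` (D \<times> {h..h'})"
  have int: "interior ?W = gl ` (interior D \<times> {h<..<h'})"
    by (simp add: interior_bijective_linear_image[OF linear_gl bij_gl] interior_Times)
  have cD: "compact D" using D polytope_imp_compact by blast
  have "continuous_on UNIV gl"
    using linear_gl by (simp add: linear_continuous_on linear_conv_bounded_linear)
  then show cW: "compact ?W"
    using cD by (intro compact_continuous_image) (auto intro: compact_Times continuous_on_subset)
  then have clW: "closed ?W" by (rule compact_imp_closed)
  have convW: "convex ?W"
    using D by (intro convex_linear_image linear_gl convex_Times) (simp_all add: polytope_imp_convex)
  have frD: "frontier D = D - interior D"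
    using cD by (simp add: frontier_def closure_closed compact_imp_closed)
  have "frontier ?W = ?W - interior ?W" using clW by (simp add: frontier_def closure_closed)
  also have "\<dots> = gl ` (D \<times> {h..h'} - interior D \<times> {h<..<h'})"
    unfolding int by (rule image_set_diff[symmetric]) (use bij_gl bij_is_inj in blast)
  also have "D \<times> {h..h'} - interior D \<times> {h<..<h'} = (D \<times> {h}) \<union> (D \<times> {h'}) \<union> (frontier D \<times> {h..h'})"
    using frD interior_subset[of D] hh by auto
  finally have frW: "frontier ?W = gl ` ((convex hull V) \<times> {h}) \<union> gl ` ((convex hull V) \<times> {h'}) \<union> gl ` (frontier D \<times> {h..h'})"
    unfolding V(2) by (simp add: image_Un)
  have "lowcx (frontier ?W)"
    unfolding frW using V(1) hh D
    by (intro lowcx_Un lowcx_hface lowcx_walls frontier_segs)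
  then obtain Lf where Lf: "finite Lf" "\<forall>C\<in>Lf. low_cell Lf C" "\<Union>Lf = frontier ?W"
    unfolding lowcx_def by blast
  let ?L = "insert (interior ?W) Lf"
  have low: "\<forall>C\<in>Lf. low_cell ?L C" using Lf(2) low_cell_mono[of Lf ?L] by blast
  have "cell21 ?L (interior ?W)"
  proof (cases "interior ?W = {}")
    case True
    then show ?thesis unfolding cell21_def by (intro disjI2 conjI) (auto intro!: exI[of _ "{}"])
  next
    case False
    have "frontier (interior ?W) = frontier ?W"
      using convex_closure_interior[OF convW False] by (simp add: frontier_def)
    then show ?thesis unfolding cell21_def using Lf(3) low
      by (intro disjI2 conjI open_interior exI[of _ Lf]) auto
  qed
  moreover have "\<Union>?L = ?W"
    using Lf(3) interior_subset[of ?W] clW by (auto simp: frontier_def closure_closed)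
  ultimately show "cx ?W" unfolding cx_def cell21_def using Lf(1) low
    by (intro exI[of _ ?L]) auto
qed



lemma complex_2p1_iff: "complex_2p1 X \<longleftrightarrow> closed X \<and> cx X"
  unfolding complex_2p1_def cx_def by blast

theorem lemma5p6:
  fixes A :: "(real ^ 3) set"
  assumes "finite A"
  shows "complex_2p1 (hv_hull A)"
proof -
  let ?H = "heights A"
  define D where "D h h' = proj_xy ` (convex hull (slice A h)) \<inter> proj_xy ` (convex hull (slice A h'))" for h h'
  define Ws where "Ws h h' = {p. proj_xy p \<in> proj_xy ` (convex hull (slice A h)) \<inter> proj_xy ` (convex hull (slice A h'))
              \<and> h \<le> zc p \<and> zc p \<le> h'}" for h h'
  have finH: "finite ?H" using assms by (simp add: heights_def)
  have finS: "finite (slice A h)" for h using assms by (simp add: slice_def)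
  have Weq: "Ws h h' = gl ` (D h h' \<times> {h..h'})" for h h'
  proof
    show "Ws h h' \<subseteq> gl ` (D h h' \<times> {h..h'})"
    proof
      fix p assume "p \<in> Ws h h'"
      then have "(proj_xy p, zc p) \<in> D h h' \<times> {h..h'}" by (simp add: Ws_def D_def)
      then show "p \<in> gl ` (D h h' \<times> {h..h'})" using gl_inv[of p] by (metis image_eqI)
    qed
    show "gl ` (D h h' \<times> {h..h'}) \<subseteq> Ws h h'"
    proof (rule image_subsetI)
      fix q assume "q \<in> D h h' \<times> {h..h'}"
      then show "gl q \<in> Ws h h'" unfolding Ws_def D_def mem_Collect_eq proj_gl zc_gl
        by (simp add: mem_Times_iff)
    qed
  qed
  have polyD: "polytope (D h h')" for h h'
    unfolding D_def
    by (intro polytope_Int polytope_linear_image[OF linear_proj] polytope_convex_hull finS)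
  define P where "P = {(h, h'). consecutive ?H h h'}"
  have finP: "finite P" unfolding P_def consecutive_def
    by (rule finite_subset[of _ "?H \<times> ?H"]) (auto simp: finH)
  have hv: "hv_hull A = h_hull A \<union> \<Union>((\<lambda>(h,h'). Ws h h') ` P)"
    unfolding hv_hull_def Ws_def P_def by auto
  have hh: "(h, h') \<in> P \<Longrightarrow> h < h'" for h h' by (simp add: P_def consecutive_def)
  have hh_eq: "h_hull A = \<Union>((\<lambda>h. convex hull (slice A h)) ` ?H)"
    unfolding h_hull_def by simp
  have cx1: "cx (h_hull A)" unfolding hh_eq
  proof (intro lowcx_cx lowcx_Union)
    show "finite ((\<lambda>h. convex hull (slice A h)) ` ?H)" using finH by simp
    fix X assume "X \<in> (\<lambda>h. convex hull (slice A h)) ` ?H"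
    then obtain h where "X = convex hull (slice A h)" by auto
    moreover have "lowcx (convex hull (slice A h))"
      by (rule lowcx_hpoly[OF finS]) (simp add: slice_def)
    ultimately show "lowcx X" by simp
  qed
  have cl1: "closed (h_hull A)" unfolding hh_eq
    by (intro closed_Union) (auto intro: finH compact_imp_closed finite_imp_compact_convex_hull finS)
  have cx2: "cx (\<Union>((\<lambda>(h,h'). Ws h h') ` P))"
    using finP by (intro cx_Union) (auto simp: Weq intro!: cx_prism(1) polyD hh)
  have cl2: "closed (\<Union>((\<lambda>(h,h'). Ws h h') ` P))"
    using finP by (intro closed_Union) (auto simp: Weq intro!: compact_imp_closed cx_prism(2) polyD hh)
  show ?thesis unfolding complex_2p1_iff hv
    using cx1 cx2 cl1 cl2 by (simp add: cx_Un closed_Un)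
qed

end
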